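(* Let $k \geq 2$ be an integer, let $u_1, \dots, u_k \in \mathbb{R}$ be real numbers that are not all equal, and let $c_1, \dots, c_k \in \mathbb{R}$. Let $(a, b) \in \mathbb{R}^2$ be a solution of the optimization problem $$\min_{a, b \in \mathbb{R}} \sum_{i=1}^k (a u_i + b + c_i)^2 .$$ Then $$a \leq \zeta(\mathbf{u}) \max_{1 \leq i \leq k} |c_i| \qquad \text{and} \qquad b = -\frac{1}{k}\sum_{i=1}^k c_i - \frac{a}{k}\sum_{i=1}^k u_i,$$ where $\zeta(\mathbf{u}) = \dfrac{2\sum_{1 \leq i<j \leq k}|u_i-u_j|}{\sum_{1 \leq i<j \leq k}(u_i-u_j)^2}$.
   Context: $\mathbf{u} = (u_1, \dots, u_k)$ denotes the vector of the given constants $u_i$. *)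

theory Defs
  imports Complex_Main
begin

text \<open>Vectors u = (u_1,...,u_k), c = (c_1,...,c_k) are represented as functions nat => real,
  only the values at indices 1..k matter.\<close>

definition lsq_obj :: "nat \<Rightarrow> (nat \<Rightarrow> real) \<Rightarrow> (nat \<Rightarrow> real) \<Rightarrow> real \<Rightarrow> real \<Rightarrow> real" where
  "lsq_obj k u c a b = (\<Sum>i=1..k. (a * u i + b + c i)^2)"

definition zeta :: "nat \<Rightarrow> (nat \<Rightarrow> real) \<Rightarrow> real" where
  "zeta k u = (2 * (\<Sum>(i,j)\<in>{(i,j). 1 \<le> i \<and> i < j \<and> j \<le> k}. \<bar>u i - u j\<bar>))
              / (\<Sum>(i,j)\<in>{(i,j). 1 \<le> i \<and> i < j \<and> j \<le> k}. (u i - u j)^2)"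

end

theory Submission
  imports Defs
begin

lemma quad_zero:
  fixes E Q :: real
  assumes Q: "Q \<ge> 0" and h: "\<forall>t. 0 \<le> 2*t*E + t^2*Q"
  shows "E = 0"
proof (rule ccontr)
  assume E: "E \<noteq> 0"
  define t where "t = - E / (Q + 1)"
  have Q1: "Q + 1 > 0" using Q by simp
  have "0 \<le> 2*t*E + t^2*Q" using h by blast
  also have "2*t*E + t^2*Q = E^2 * (Q - 2*(Q+1)) / (Q+1)^2"
    using Q1 by (simp add: t_def divide_simps power2_eq_square) (simp add: algebra_simps)
  also have "\<dots> < 0" using E Q
    by (intro divide_neg_pos mult_pos_neg) auto
  finally show False by simp
qed

lemma pair_sum:
  fixes g :: "nat \<Rightarrow> nat \<Rightarrow> real"
  assumes sym: "\<And>i j. g i j = g j i" and diag: "\<And>i. g i i = 0"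
  shows "(\<Sum>i=1..k. \<Sum>j=1..k. g i j) = 2 * (\<Sum>(i,j)\<in>{(i,j). 1 \<le> i \<and> i < j \<and> j \<le> k}. g i j)"
proof -
  define P where "P = {(i,j). 1 \<le> i \<and> i < j \<and> j \<le> k}"
  define P' where "P' = {(i,j). 1 \<le> j \<and> j < i \<and> i \<le> k}"
  define D where "D = {(i,j). 1 \<le> i \<and> i = j \<and> j \<le> k}"
  have sq: "{1..k} \<times> {1..k} = P \<union> P' \<union> D" unfolding P_def P'_def D_def by auto
  have fin: "finite ({1..k} \<times> {1..k})" by simp
  have fP: "finite P" "finite P'" "finite D" using fin sq by (auto intro: finite_subset)
  have "(\<Sum>i=1..k. \<Sum>j=1..k. g i j) = (\<Sum>(i,j)\<in>{1..k} \<times> {1..k}. g i j)"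
    by (simp add: sum.cartesian_product)
  also have "\<dots> = (\<Sum>(i,j)\<in>P. g i j) + (\<Sum>(i,j)\<in>P'. g i j) + (\<Sum>(i,j)\<in>D. g i j)"
    unfolding sq using fP
    by (subst sum.union_disjoint, auto simp: P_def P'_def D_def intro: sum.union_disjoint)
  also have "(\<Sum>(i,j)\<in>D. g i j) = 0"
    by (rule sum.neutral) (auto simp: D_def diag)
  also have "(\<Sum>(i,j)\<in>P'. g i j) = (\<Sum>(i,j)\<in>P. g i j)"
  proof -
    have "P' = prod.swap ` P" unfolding P_def P'_def by auto
    then have "(\<Sum>(i,j)\<in>P'. g i j) = (\<Sum>x\<in>P. (\<lambda>(i,j). g i j) (prod.swap x))"
      by (simp add: sum.reindex)
    also have "\<dots> = (\<Sum>(i,j)\<in>P. g i j)"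
      by (rule sum.cong) (auto simp: sym)
    finally show ?thesis .
  qed
  finally show ?thesis unfolding P_def by simp
qed

lemma double_expand:
  fixes u r :: "nat \<Rightarrow> real"
  shows "(\<Sum>i=1..k. \<Sum>j=1..k. (u i - u j) * (r i - r j))
     = 2 * (real k * (\<Sum>i=1..k. u i * r i) - (\<Sum>i=1..k. u i) * (\<Sum>i=1..k. r i))"
proof -
  have "(\<Sum>i=1..k. \<Sum>j=1..k. (u i - u j) * (r i - r j))
     = (\<Sum>i=1..k. real k * (u i * r i) - u i * (\<Sum>j=1..k. r j) - r i * (\<Sum>j=1..k. u j) + (\<Sum>j=1..k. u j * r j))"
    by (rule sum.cong) (auto simp: algebra_simps sum.distrib sum_subtractf sum_distrib_left)
  also have "\<dots> = 2 * (real k * (\<Sum>i=1..k. u i * r i) - (\<Sum>i=1..k. u i) * (\<Sum>i=1..k. r i))"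
  proof -
    have 1: "(\<Sum>i=1..k. u i * (\<Sum>j=1..k. r j)) = (\<Sum>i=1..k. u i) * (\<Sum>i=1..k. r i)"
      by (simp add: sum_distrib_right)
    have 2: "(\<Sum>i=1..k. r i * (\<Sum>j=1..k. u j)) = (\<Sum>i=1..k. u i) * (\<Sum>i=1..k. r i)"
      by (simp add: sum_distrib_right mult.commute)
    have 3: "(\<Sum>i=1..k. real k * (u i * r i)) = real k * (\<Sum>i=1..k. u i * r i)"
      by (simp add: sum_distrib_left)
    show ?thesis by (simp only: sum.distrib sum_subtractf 1 2 3) simp
  qed
  finally show ?thesis .
qed

theorem propositionA1:
  fixes k :: nat and u c :: "nat \<Rightarrow> real" and a b :: real
  assumes "k \<ge> 2"
    and "\<exists>i\<in>{1..k}. \<exists>j\<in>{1..k}. u i \<noteq> u j"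
    and "\<forall>a' b'. lsq_obj k u c a b \<le> lsq_obj k u c a' b'"
  shows "a \<le> zeta k u * (MAX i\<in>{1..k}. \<bar>c i\<bar>)
    \<and> b = - (1 / real k) * (\<Sum>i=1..k. c i) - (a / real k) * (\<Sum>i=1..k. u i)"
proof -
  define r where "r i = a * u i + b + c i" for i
  have Eb: "(\<Sum>i=1..k. r i) = 0"
  proof (rule quad_zero[where Q = "real k"])
    show "\<forall>t. 0 \<le> 2 * t * (\<Sum>i=1..k. r i) + t\<^sup>2 * real k"
    proof
      fix t
      have "lsq_obj k u c a b \<le> lsq_obj k u c a (b + t)" using assms(3) by blast
      also have "lsq_obj k u c a (b + t) = lsq_obj k u c a b + (2 * t * (\<Sum>i=1..k. r i) + t\<^sup>2 * real k)"
        unfolding lsq_obj_def r_def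
        by (simp add: power2_eq_square algebra_simps sum.distrib sum_distrib_left)
      finally show "0 \<le> 2 * t * (\<Sum>i=1..k. r i) + t\<^sup>2 * real k" by simp
    qed
  qed simp
  have Ea: "(\<Sum>i=1..k. u i * r i) = 0"
  proof (rule quad_zero[where Q = "\<Sum>i=1..k. (u i)^2"])
    show "\<forall>t. 0 \<le> 2 * t * (\<Sum>i=1..k. u i * r i) + t\<^sup>2 * (\<Sum>i=1..k. (u i)^2)"
    proof
      fix t
      have "lsq_obj k u c a b \<le> lsq_obj k u c (a + t) b" using assms(3) by blast
      also have "lsq_obj k u c (a + t) b = lsq_obj k u c a b + (2 * t * (\<Sum>i=1..k. u i * r i) + t\<^sup>2 * (\<Sum>i=1..k. (u i)^2))"
        unfolding lsq_obj_def r_def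
        by (simp add: power2_eq_square algebra_simps sum.distrib sum_distrib_left)
      finally show "0 \<le> 2 * t * (\<Sum>i=1..k. u i * r i) + t\<^sup>2 * (\<Sum>i=1..k. (u i)^2)" by simp
    qed
  qed (simp add: sum_nonneg)
  have kpos: "real k > 0" using assms(1) by simp
  have bform: "b = - (1 / real k) * (\<Sum>i=1..k. c i) - (a / real k) * (\<Sum>i=1..k. u i)"
  proof -
    have "(\<Sum>i=1..k. r i) = a * (\<Sum>i=1..k. u i) + real k * b + (\<Sum>i=1..k. c i)"
      unfolding r_def by (simp add: sum.distrib sum_distrib_left)
    with Eb kpos show ?thesis by (simp add: field_simps)
  qed
  define P where "P = {(i,j). 1 \<le> i \<and> i < j \<and> j \<le> k}"
  have finP: "finite P"
    by (rule finite_subset[of _ "{1..k} \<times> {1..k}"]) (auto simp: P_def)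
  define S2 where "S2 = (\<Sum>(i,j)\<in>P. (u i - u j)^2)"
  define S1 where "S1 = (\<Sum>(i,j)\<in>P. \<bar>u i - u j\<bar>)"
  define T where "T = (\<Sum>(i,j)\<in>P. (u i - u j) * (c i - c j))"
  have "2 * (\<Sum>(i,j)\<in>P. (u i - u j) * (r i - r j)) = 0"
    using double_expand[where k=k and u=u and r=r] pair_sum[where g="\<lambda>i j. (u i - u j) * (r i - r j)" and k=k] Ea Eb
    unfolding P_def by (simp add: algebra_simps)
  then have "(\<Sum>(i,j)\<in>P. (u i - u j) * (r i - r j)) = 0" by simp
  moreover have "(\<Sum>(i,j)\<in>P. (u i - u j) * (r i - r j)) = a * S2 + T"
    unfolding S2_def T_def r_def
    by (simp add: sum_distrib_left sum.distrib[symmetric] case_prod_unfold power2_eq_square algebra_simps)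
  ultimately have aS2: "a * S2 = - T" by simp
  define M where "M = (MAX i\<in>{1..k}. \<bar>c i\<bar>)"
  have M: "\<bar>c i\<bar> \<le> M" if "i \<in> {1..k}" for i
    unfolding M_def using that by (intro Max_ge) auto
  have "- T \<le> (\<Sum>(i,j)\<in>P. \<bar>u i - u j\<bar> * (2 * M))"
    unfolding T_def sum_negf[symmetric]
  proof (rule sum_mono, clarify)
    fix i j assume "(i, j) \<in> P"
    then have "i \<in> {1..k}" "j \<in> {1..k}" by (auto simp: P_def)
    then have "\<bar>c i\<bar> \<le> M" "\<bar>c j\<bar> \<le> M" using M by auto
    then have "\<bar>c i - c j\<bar> \<le> 2 * M" by linarith
    then have "\<bar>u i - u j\<bar> * \<bar>c i - c j\<bar> \<le> \<bar>u i - u j\<bar> * (2 * M)"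
      by (intro mult_left_mono) auto
    moreover have "- ((u i - u j) * (c i - c j)) \<le> \<bar>u i - u j\<bar> * \<bar>c i - c j\<bar>"
      by (simp add: abs_mult[symmetric])
    ultimately show "- ((u i - u j) * (c i - c j)) \<le> \<bar>u i - u j\<bar> * (2 * M)" by linarith
  qed
  also have "\<dots> = 2 * S1 * M" unfolding S1_def
    by (simp add: sum_distrib_right sum_distrib_left case_prod_unfold mult.assoc mult.left_commute)
  finally have ineq: "a * S2 \<le> 2 * S1 * M" using aS2 by simp
  have S2pos: "S2 > 0"
  proof -
    obtain i j where ij: "i \<in> {1..k}" "j \<in> {1..k}" "u i \<noteq> u j" using assms(2) by blast
    define p where "p = (if i < j then (i,j) else (j,i))"
    have "i \<noteq> j" using ij by auto
    then have pP: "p \<in> P" using ij by (auto simp: p_def P_def)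
    have "0 < (\<lambda>(i,j). (u i - u j)^2) p" using ij by (auto simp: p_def)
    then show ?thesis unfolding S2_def
      using finP pP by (intro sum_pos2[OF finP pP]) auto
  qed
  have "a \<le> 2 * S1 * M / S2" using ineq S2pos by (simp add: field_simps)
  also have "\<dots> = zeta k u * M" unfolding zeta_def S1_def S2_def P_def by simp
  finally show ?thesis using bform unfolding M_def by simp
qed

end
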